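(* Let $k \geq 2$ and $n \geq 1$ be integers, let $\Sigma_k = \{0,1,\ldots,k-1\}$, and let $\mathcal{D}$ be the set of primitive words in $\Sigma_k^n$. Consider the following procedure, which outputs symbols one at a time: (1) output $0^{n-1}$; (2) repeatedly, letting $x$ be the last $n-1$ symbols output so far, choose the largest $i \in \{0,\ldots,k-1\}$ such that $xi$ is primitive and $xi$ has not yet appeared as a factor of the word output so far, and output $i$; terminate when there is no such $i$. Then this procedure terminates and outputs a word of length $|\mathcal{D}| + n - 1$ that contains every primitive word in $\Sigma_k^n$ as a factor.
   Context: A word $w$ is primitive if there is no word $x$ and integer $p \geq 2$ with $w = x^p$. A factor (subword) of a word is a contiguous block of consecutive symbols. *)

theory Defs
  imports Main "HOL-Library.Sublist"
begin

text \<open>Words over \<Sigma>_k = {0..k-1} are lists of naturals with entries < k.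
  Factor = contiguous subword = sublist (HOL-Library.Sublist).\<close>

definition primitive :: "'a list \<Rightarrow> bool" where
  "primitive w \<longleftrightarrow> \<not> (\<exists>x p. p \<ge> (2::nat) \<and> w = concat (replicate p x))"

definition prim_words :: "nat \<Rightarrow> nat \<Rightarrow> nat list set" where
  "prim_words k n = {w. length w = n \<and> set w \<subseteq> {..<k} \<and> primitive w}"

definition next_sym :: "nat \<Rightarrow> nat \<Rightarrow> nat list \<Rightarrow> nat option" where
  "next_sym k n w =
     (let x = drop (length w - (n - 1)) w;
          S = {i. i < k \<and> primitive (x @ [i]) \<and> \<not> sublist (x @ [i]) w}
      in if S = {} then None else Some (Max S))"

text \<open>Output after m steps (stays fixed once the procedure has stopped).\<close>
primrec gen :: "nat \<Rightarrow> nat \<Rightarrow> nat \<Rightarrow> nat list" where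
  "gen k n 0 = replicate (n - 1) 0"
| "gen k n (Suc m) = (case next_sym k n (gen k n m) of
       None \<Rightarrow> gen k n m
     | Some i \<Rightarrow> gen k n m @ [i])"

end

theory Submission
  imports Defs
begin


lemma concat_rep_nth: "i < p * length x \<Longrightarrow> concat (replicate p x) ! i = x ! (i mod length x)"
proof (induction p arbitrary: i)
  case 0 then show ?case by simp
next
  case (Suc p)
  show ?case
  proof (cases "i < length x")
    case True
    have "concat (replicate (Suc p) x) = x @ concat (replicate p x)" by simp
    then show ?thesis using True by (simp add: nth_append)
  next
    case False
    then have "i - length x < p * length x" using Suc.prems by auto
    then have "concat (replicate p x) ! (i - length x) = x ! ((i - length x) mod length x)" using Suc.IH by blast
    moreover have "(i - length x) mod length x = i mod length x" using False
      by (simp add: le_mod_geq)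
    moreover have "concat (replicate (Suc p) x) = x @ concat (replicate p x)" by simp
    ultimately show ?thesis using False by (simp add: nth_append)
  qed
qed

lemma nonprim_period:
  assumes "\<not> primitive w" "w \<noteq> []"
  shows "\<exists>d. 0 < d \<and> d < length w \<and> d dvd length w \<and>
     (\<forall>i j. i < length w \<longrightarrow> j < length w \<longrightarrow> i mod d = j mod d \<longrightarrow> w!i = w!j)"
proof -
  have "\<exists>x p. p \<ge> 2 \<and> w = concat (replicate p x)" using assms(1) unfolding primitive_def by simp
  then obtain x p where p: "p \<ge> 2" and w: "w = concat (replicate p x)" by blast
  have lw: "length w = p * length x" unfolding w by (simp add: length_concat sum_list_replicate)
  have "x \<noteq> []"
  proof
    assume "x = []" then show False using assms(2) w by simp
  qed
  then have d0: "0 < length x" by simp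
  have "2 * length x \<le> p * length x" using p by simp
  then have lt: "length x < length w" using lw d0 by linarith
  have dv: "length x dvd length w" using lw by simp
  have per: "\<forall>i j. i < length w \<longrightarrow> j < length w \<longrightarrow> i mod length x = j mod length x \<longrightarrow> w!i = w!j"
  proof (intro allI impI)
    fix i j assume a: "i < length w" "j < length w" "i mod length x = j mod length x"
    have "w!i = x!(i mod length x)" unfolding w by (rule concat_rep_nth) (use a(1) lw in simp)
    moreover have "w!j = x!(j mod length x)" unfolding w by (rule concat_rep_nth) (use a(2) lw in simp)
    ultimately show "w!i = w!j" using a(3) by simp
  qed
  show ?thesis using d0 lt dv per by blast
qed

lemma nonprimI: "p \<ge> 2 \<Longrightarrow> w = concat (replicate p x) \<Longrightarrow> \<not> primitive w"
  unfolding primitive_def by blast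

lemma concat_rep_snoc: "concat (replicate q z) @ z = concat (replicate (Suc q) z)"
  by (induction q) auto

lemma rep_cons: "concat (replicate (Suc p) (a#b)) = a # concat (replicate p (b@[a])) @ b"
proof (induction p)
  case 0 then show ?case by simp
next
  case (Suc p)
  have "concat (replicate (Suc (Suc p)) (a#b)) = (a#b) @ concat (replicate (Suc p) (a#b))" by simp
  also have "\<dots> = a # (b @ [a]) @ concat (replicate p (b@[a])) @ b" using Suc by simp
  finally show ?case by simp
qed

lemma nonprim_cons_snoc: "\<not> primitive (a#y) \<Longrightarrow> \<not> primitive (y@[a])"
proof -
  assume "\<not> primitive (a#y)"
  then have "\<exists>x p. p \<ge> 2 \<and> a#y = concat (replicate p x)" unfolding primitive_def by simp
  then obtain x p where p: "p \<ge> 2" and w: "a#y = concat (replicate p x)" by blast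
  have "x \<noteq> []"
  proof
    assume "x = []" then show False using w by simp
  qed
  then obtain b x' where x: "x = b#x'" by (cases x) auto
  obtain q where q: "p = Suc q" "q \<ge> 1" using p by (cases p) auto
  have "a#y = b # concat (replicate q (x'@[b])) @ x'" using w unfolding x q(1) rep_cons .
  then have ab: "a = b" and y: "y = concat (replicate q (x'@[b])) @ x'" by simp_all
  have "y @ [a] = concat (replicate q (x'@[a])) @ (x' @ [a])" using y ab by simp
  also have "\<dots> = concat (replicate p (x'@[a]))" unfolding q(1) by (rule concat_rep_snoc)
  finally show ?thesis using p by (rule nonprimI[rotated])
qed

lemma nonprim_rev: "\<not> primitive w \<Longrightarrow> \<not> primitive (rev w)"
proof -
  assume "\<not> primitive w"
  then obtain x p where p: "p \<ge> 2" and w: "w = concat (replicate p x)" unfolding primitive_def by blast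
  have "rev w = concat (replicate p (rev x))" using w by (simp add: rev_concat)
  then show ?thesis using p by (rule nonprimI[rotated])
qed

lemma prim_cons_snoc: "primitive (a#y) \<longleftrightarrow> primitive (y@[a])"
proof
  assume h: "primitive (a#y)" show "primitive (y@[a])"
  proof (rule ccontr)
    assume "\<not> primitive (y@[a])"
    then have "\<not> primitive (rev (y@[a]))" by (rule nonprim_rev)
    then have "\<not> primitive (a # rev y)" by simp
    then have "\<not> primitive (rev y @ [a])" by (rule nonprim_cons_snoc)
    then have "\<not> primitive (rev (rev y @ [a]))" by (rule nonprim_rev)
    then have "\<not> primitive (a#y)" by simp
    then show False using h by simp
  qed
next
  assume h: "primitive (y@[a])" show "primitive (a#y)"
  proof (rule ccontr)
    assume "\<not> primitive (a#y)"
    then have "\<not> primitive (y@[a])" by (rule nonprim_cons_snoc)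
    then show False using h by simp
  qed
qed



lemma dvd_less_half: "(e::nat) dvd n \<Longrightarrow> e < n \<Longrightarrow> 2 * e \<le> n"
proof -
  assume a: "e dvd n" "e < n"
  then obtain m where m: "n = e * m" by blast
  have "m \<noteq> 0" "m \<noteq> 1" using a m by auto
  then have "m \<ge> 2" by simp
  then show ?thesis using m by (metis mult.commute mult_le_mono1)
qed

lemma mod_add_mult_eq: "((i::nat) + m * e) mod e = i mod e" by simp

lemma L1:
  fixes x :: "nat list" and c j n d :: nat
  assumes n: "length x + 1 = n"
    and d: "0 < d" "d < n" "d dvd n"
    and perZ: "\<forall>i i'. i < n \<longrightarrow> i' < n \<longrightarrow> i mod d = i' mod d \<longrightarrow> (x@[0])!i = (x@[0])!i'"
    and c: "c \<noteq> 0" and j: "j < d"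
  shows "primitive (drop j (x@[c]) @ replicate j 0)"
proof (rule ccontr)
  define W where "W = drop j (x@[c]) @ replicate j 0"
  define Z where "Z = x @ [0::nat]"
  assume "\<not> primitive (drop j (x@[c]) @ replicate j 0)"
  then have np: "\<not> primitive W" unfolding W_def .
  have d2: "2 * d \<le> n" using d dvd_less_half by blast
  have jx: "j \<le> length x" using j d2 n by linarith
  have Wd: "W = drop j x @ [c] @ replicate j 0" unfolding W_def using jx by simp
  have lW: "length W = n" unfolding Wd using jx n by simp
  have "W \<noteq> []" using lW d by auto
  then obtain e where e: "0 < e" "e < n" "e dvd n"
    and perW: "\<forall>i i'. i < n \<longrightarrow> i' < n \<longrightarrow> i mod e = i' mod e \<longrightarrow> W!i = W!i'"
    using nonprim_period[OF np] lW by auto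
  have e2: "2 * e \<le> n" using e dvd_less_half by blast
  have WA: "W!i = Z!(i+j)" if "i < n - 1 - j" for i
    using that jx n unfolding Wd Z_def by (auto simp: nth_append add.commute)
  have WC: "W!(n-1-j) = c" using jx n unfolding Wd by (auto simp: nth_append)
  have WZ: "W!i = 0" if "n - j \<le> i" "i < n" for i
    using that jx n unfolding Wd by (auto simp: nth_append)
  have Zl: "Z!(n-1) = 0" unfolding Z_def using n by (auto simp: nth_append)
  have cong: "Z!i = Z!i'" if "i < n" "i' < n" "i mod d = i' mod d" for i i'
    using perZ that unfolding Z_def by blast
  have congW: "W!i = W!i'" if "i < n" "i' < n" "i mod e = i' mod e" for i i'
    using perW that by blast
  have n1: "0 < n" using d by simp
  have ej: "j < e"
  proof (rule ccontr)
    assume nj: "\<not> j < e"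
    have i1: "n-1-j < n" using n1 by arith
    have i2: "n-1-j+e < n" using nj j d by arith
    have "W!(n-1-j) = W!(n-1-j+e)" by (rule congW[OF i1 i2]) simp
    also have "\<dots> = 0" by (rule WZ) (use nj j d e in arith)+
    finally show False using WC c by simp
  qed
  have je: "j + e < n" using j d2 e2 by arith
  show False
  proof (cases "d dvd e")
    case True
    have "W!(n-1-j-e) = W!(n-1-j)"
    proof (rule congW)
      show "n-1-j-e < n" using e by arith
      show "n-1-j < n" using e by arith
      have "n-1-j = (n-1-j-e) + 1 * e" using je by arith
      then show "(n-1-j-e) mod e = (n-1-j) mod e" by (metis mod_add_mult_eq)
    qed
    also have "\<dots> = c" by (rule WC)
    finally have "W!(n-1-j-e) = c" .
    moreover have "W!(n-1-j-e) = Z!(n-1-j-e+j)" by (rule WA) (use je e in arith)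
    moreover have "n-1-j-e+j = n-1-e" using je by arith
    moreover have "Z!(n-1-e) = Z!(n-1)"
    proof (rule cong)
      show "n-1-e < n" "n - 1 < n" using e by arith+
      obtain m where "e = d * m" using True by blast
      then have "n-1 = (n-1-e) + m * d" using je by (simp add: mult.commute)
      then show "(n-1-e) mod d = (n-1) mod d" by (metis mod_add_mult_eq)
    qed
    ultimately show False using Zl c by simp
  next
    case False
    define l where "l = lcm d e"
    have ld: "d dvd l" and le: "e dvd l" unfolding l_def by auto
    have ln: "l dvd n" unfolding l_def using d e by (simp add: lcm_least)
    have l0: "0 < l" unfolding l_def using d e by (simp add: lcm_pos_nat)
    have lle: "l \<le> n" using ln d by (simp add: dvd_imp_le)
    have lne: "l \<noteq> e" using ld False by auto
    have egl: "e \<le> l" using le l0 by (simp add: dvd_imp_le)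
    have elt: "e < l" using egl lne by simp
    define P where "P = n - 1 - j - (l - e)"
    have P1: "P < n - 1 - j" unfolding P_def using elt lle ej by arith
    have "W!P = W!(n-1-j)"
    proof (rule congW)
      show "P < n" "n-1-j < n" unfolding P_def using e by arith+
      obtain m where m: "l = e * m" using le by blast
      have "l - e = (m - 1) * e" using m by (simp add: algebra_simps diff_mult_distrib)
      moreover have "n - 1 - j = P + (l - e)" unfolding P_def using lle ej elt by arith
      ultimately show "P mod e = (n-1-j) mod e" by (metis mod_add_mult_eq)
    qed
    then have WP: "W!P = c" using WC by simp
    have "W!P = Z!(P+j)" using WA P1 by blast
    moreover have "Z!(P+j) = Z!(e-1)"
    proof (rule cong)
      show "P + j < n" using P1 by arith
      show "e - 1 < n" using e by arith
      obtain m where m: "n - l = d * m" using ld d(3) by (metis dvd_diff_nat dvd_def)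
      have "P + j = (e - 1) + (n - l)" unfolding P_def using lle elt ej e by arith
      then have "P + j = (e - 1) + m * d" using m by (simp add: mult.commute)
      then show "(P+j) mod d = (e-1) mod d" by (metis mod_add_mult_eq)
    qed
    ultimately have Ze: "Z!(e-1) = c" using WP by simp
    have dne: "d \<noteq> e" using False by auto
    have de: "d + e < n" using d2 e2 dne by arith
    have "Z!(d-1) = Z!(n-1)"
    proof (rule cong)
      show "d - 1 < n" "n - 1 < n" using d by arith+
      obtain m where m: "n = d * m" using d by blast
      have "m \<ge> 1" using m d by (cases m) auto
      then have "n - 1 = (d - 1) + (m - 1) * d" using m d by (cases m) (auto simp: algebra_simps)
      then show "(d-1) mod d = (n-1) mod d" by (metis mod_add_mult_eq)
    qed
    then have Zd: "Z!(d-1) = 0" using Zl by simp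
    have "W!(d-1-j) = Z!(d-1-j+j)" by (rule WA) (use j d2 in arith)
    moreover have "d-1-j+j = d-1" using j by arith
    ultimately have W1: "W!(d-1-j) = 0" using Zd by metis
    have "W!(d-1-j) = W!(d-1-j+e)"
    proof (rule congW)
      show "d-1-j < n" "d-1-j+e < n" using de j by arith+
      show "(d-1-j) mod e = (d-1-j+e) mod e" by simp
    qed
    then have W2: "W!(d-1-j+e) = 0" using W1 by simp
    have "W!(d-1-j+e) = Z!(d-1-j+e+j)" by (rule WA) (use j de in arith)
    moreover have "d-1-j+e+j = d-1+e" using j by arith
    ultimately have Z2: "Z!(d-1+e) = 0" using W2 by metis
    have "Z!(d-1+e) = Z!(e-1)"
    proof (rule cong)
      show "d-1+e < n" "e - 1 < n" using de e by arith+
      have "d-1+e = (e-1) + 1 * d" using d e by arith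
      then show "(d-1+e) mod d = (e-1) mod d" by (metis mod_add_mult_eq)
    qed
    then have "Z!(e-1) = 0" using Z2 by simp
    then show False using Ze c by simp
  qed
qed



definition Eset :: "nat \<Rightarrow> nat list \<Rightarrow> nat list set" where
  "Eset n w = {e. length e = n \<and> sublist e w}"

definition lst :: "nat \<Rightarrow> nat list \<Rightarrow> nat list" where
  "lst n w = drop (length w - (n - 1)) w"

definition InS :: "nat \<Rightarrow> nat list \<Rightarrow> nat list \<Rightarrow> nat list set" where
  "InS n w y = {e \<in> Eset n w. tl e = y}"

definition OutS :: "nat \<Rightarrow> nat list \<Rightarrow> nat list \<Rightarrow> nat list set" where
  "OutS n w y = {e \<in> Eset n w. butlast e = y}"

definition Inv :: "nat \<Rightarrow> nat \<Rightarrow> nat list \<Rightarrow> bool" where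
  "Inv k n w \<longleftrightarrow> length w \<ge> n - 1 \<and> set w \<subseteq> {..<k}
     \<and> (\<forall>e\<in>Eset n w. primitive e)
     \<and> card (Eset n w) + (n - 1) = length w
     \<and> (\<forall>y. card (InS n w y) + (if y = replicate (n-1) 0 then 1 else 0)
            = card (OutS n w y) + (if y = lst n w then 1 else 0))
     \<and> (\<forall>y a a'. y @ [a] \<in> Eset n w \<longrightarrow> a < a' \<longrightarrow> a' < k \<longrightarrow> primitive (y @ [a'])
            \<longrightarrow> y @ [a'] \<in> Eset n w)"

lemma finite_Eset: "finite (Eset n w)"
proof -
  have "Eset n w \<subseteq> set (sublists w)" unfolding Eset_def by auto
  then show ?thesis by (rule finite_subset) simp
qed

lemma suffix_len_eq: "suffix e ys \<Longrightarrow> e = drop (length ys - length e) ys"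
  unfolding suffix_def by auto

lemma Eset_snoc:
  assumes "n \<ge> 1" "length w \<ge> n - 1"
  shows "Eset n (w @ [i]) = insert (lst n w @ [i]) (Eset n w)"
proof -
  have dr: "drop (length (w@[i]) - n) (w@[i]) = lst n w @ [i]"
    unfolding lst_def using assms by simp
  have ll: "length (lst n w @ [i]) = n" unfolding lst_def using assms by simp
  show ?thesis
  proof (intro set_eqI iffI)
    fix e assume "e \<in> Eset n (w @ [i])"
    then have le: "length e = n" and "suffix e (w@[i]) \<or> sublist e w"
      unfolding Eset_def by (auto simp: sublist_snoc)
    then show "e \<in> insert (lst n w @ [i]) (Eset n w)"
      using suffix_len_eq[of e "w@[i]"] dr unfolding Eset_def by auto
  next
    fix e assume "e \<in> insert (lst n w @ [i]) (Eset n w)"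
    then show "e \<in> Eset n (w @ [i])"
    proof
      assume "e = lst n w @ [i]"
      moreover have "suffix (lst n w @ [i]) (w @ [i])" unfolding lst_def suffix_def
        by (metis append_assoc append_take_drop_id)
      ultimately show ?thesis using ll unfolding Eset_def by auto
    next
      assume "e \<in> Eset n w"
      then show ?thesis unfolding Eset_def
        by (auto simp: sublist_snoc)
    qed
  qed
qed

lemma lst_snoc:
  assumes "n \<ge> 1" "length w \<ge> n - 1"
  shows "lst n (w @ [i]) = tl (lst n w @ [i])"
proof (cases "n = 1")
  case True then show ?thesis unfolding lst_def by simp
next
  case False
  then have n2: "n \<ge> 2" using assms by simp
  have "lst n w \<noteq> []" unfolding lst_def using n2 assms by simp
  then have "tl (lst n w @ [i]) = tl (lst n w) @ [i]" by simp
  also have "tl (lst n w) = drop (length w + 1 - (n - 1)) w"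
    unfolding lst_def using n2 assms by (simp add: drop_Suc tl_drop Suc_diff_le)
  finally show ?thesis unfolding lst_def using n2 assms by simp
qed



lemma next_sym_Some:
  assumes "next_sym k n w = Some i"
  shows "i < k" "primitive (lst n w @ [i])" "\<not> sublist (lst n w @ [i]) w"
    "\<And>a. a < k \<Longrightarrow> primitive (lst n w @ [a]) \<Longrightarrow> \<not> sublist (lst n w @ [a]) w \<Longrightarrow> a \<le> i"
proof -
  define S where "S = {i. i < k \<and> primitive (lst n w @ [i]) \<and> \<not> sublist (lst n w @ [i]) w}"
  have ns: "next_sym k n w = (if S = {} then None else Some (Max S))"
    unfolding next_sym_def S_def lst_def Let_def by simp
  have fS: "finite S" unfolding S_def by (rule finite_subset[of _ "{..<k}"]) auto
  have "S \<noteq> {}" and iM: "i = Max S" using assms ns by (auto split: if_splits)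
  then have "i \<in> S" using fS by simp
  then show "i < k" "primitive (lst n w @ [i])" "\<not> sublist (lst n w @ [i]) w" unfolding S_def by auto
  show "\<And>a. a < k \<Longrightarrow> primitive (lst n w @ [a]) \<Longrightarrow> \<not> sublist (lst n w @ [a]) w \<Longrightarrow> a \<le> i"
    using iM fS unfolding S_def by simp
qed

lemma next_sym_None:
  assumes "next_sym k n w = None" "a < k" "primitive (lst n w @ [a])"
  shows "sublist (lst n w @ [a]) w"
proof -
  define S where "S = {i. i < k \<and> primitive (lst n w @ [i]) \<and> \<not> sublist (lst n w @ [i]) w}"
  have ns: "next_sym k n w = (if S = {} then None else Some (Max S))"
    unfolding next_sym_def S_def lst_def Let_def by simp
  then have "S = {}" using assms(1) by (auto split: if_splits)
  then show ?thesis using assms unfolding S_def by auto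
qed

lemma Inv_step:
  assumes inv: "Inv k n w" and n: "n \<ge> 1" and ns: "next_sym k n w = Some i"
  shows "Inv k n (w @ [i])"
proof -
  define x where "x = lst n w"
  define e0 where "e0 = x @ [i]"
  have lw: "length w \<ge> n - 1" and sw: "set w \<subseteq> {..<k}"
    and pr: "\<forall>e\<in>Eset n w. primitive e" and cd: "card (Eset n w) + (n - 1) = length w"
    and bal: "\<And>y. card (InS n w y) + (if y = replicate (n-1) 0 then 1 else 0)
            = card (OutS n w y) + (if y = lst n w then 1 else 0)"
    and top: "\<And>y a a'. y @ [a] \<in> Eset n w \<Longrightarrow> a < a' \<Longrightarrow> a' < k \<Longrightarrow> primitive (y @ [a'])
            \<Longrightarrow> y @ [a'] \<in> Eset n w"
    using inv unfolding Inv_def by blast+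
  have ik: "i < k" and pe: "primitive e0" and nsub: "\<not> sublist e0 w"
    and mx: "\<And>a. a < k \<Longrightarrow> primitive (x @ [a]) \<Longrightarrow> \<not> sublist (x @ [a]) w \<Longrightarrow> a \<le> i"
    using next_sym_Some[OF ns] unfolding e0_def x_def by auto
  have E': "Eset n (w@[i]) = insert e0 (Eset n w)" unfolding e0_def x_def using Eset_snoc[OF n lw] .
  have nin: "e0 \<notin> Eset n w" using nsub unfolding Eset_def by auto
  have fE: "finite (Eset n w)" by (rule finite_Eset)
  have cE: "card (Eset n (w@[i])) = card (Eset n w) + 1" using E' nin fE by simp
  have lst': "lst n (w@[i]) = tl e0" unfolding e0_def x_def using lst_snoc[OF n lw] .
  have bl: "butlast e0 = x" unfolding e0_def by simp
  have In': "InS n (w@[i]) y = (if tl e0 = y then insert e0 (InS n w y) else InS n w y)" for y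
    unfolding InS_def E' by auto
  have Out': "OutS n (w@[i]) y = (if x = y then insert e0 (OutS n w y) else OutS n w y)" for y
    unfolding OutS_def E' using bl by auto
  have fI: "finite (InS n w y)" for y unfolding InS_def using fE by simp
  have fO: "finite (OutS n w y)" for y unfolding OutS_def using fE by simp
  have nI: "e0 \<notin> InS n w y" for y unfolding InS_def using nin by simp
  have nO: "e0 \<notin> OutS n w y" for y unfolding OutS_def using nin by simp
  have cI: "card (InS n (w@[i]) y) = card (InS n w y) + (if tl e0 = y then 1 else 0)" for y
    using In'[of y] fI[of y] nI[of y] by simp
  have cO: "card (OutS n (w@[i]) y) = card (OutS n w y) + (if x = y then 1 else 0)" for y
    using Out'[of y] fO[of y] nO[of y] by simp
  have bal': "card (InS n (w@[i]) y) + (if y = replicate (n-1) 0 then 1 else 0)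
            = card (OutS n (w@[i]) y) + (if y = lst n (w@[i]) then 1 else 0)" for y
    using bal[of y] cI[of y] cO[of y] lst' unfolding x_def by auto
  have top': "y @ [a'] \<in> Eset n (w@[i])"
    if h: "y @ [a] \<in> Eset n (w@[i])" "a < a'" "a' < k" "primitive (y @ [a'])" for y a a'
  proof (cases "y @ [a] = e0")
    case True
    then have yx: "y = x" and ai: "a = i" unfolding e0_def by auto
    have "sublist (x @ [a']) w"
    proof (rule ccontr)
      assume "\<not> sublist (x @ [a']) w"
      then have "a' \<le> i" using mx h yx by blast
      then show False using h ai by simp
    qed
    moreover have "length (x @ [a']) = n" unfolding x_def lst_def using lw n by simp
    ultimately have "y @ [a'] \<in> Eset n w" unfolding Eset_def yx by simp
    then show ?thesis using E' by simp
  next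
    case False
    then have "y @ [a] \<in> Eset n w" using h E' by simp
    then have "y @ [a'] \<in> Eset n w" using top h by blast
    then show ?thesis using E' by simp
  qed
  show ?thesis unfolding Inv_def
  proof (intro conjI allI impI ballI)
    show "n - 1 \<le> length (w @ [i])" using lw by simp
    show "set (w @ [i]) \<subseteq> {..<k}" using sw ik by simp
    show "primitive e" if "e \<in> Eset n (w @ [i])" for e using that pr pe E' by auto
    show "card (Eset n (w @ [i])) + (n - 1) = length (w @ [i])" using cE cd by simp
  qed (use bal' top' in auto)
qed

lemma Inv_init: "n \<ge> 1 \<Longrightarrow> k \<ge> 1 \<Longrightarrow> Inv k n (replicate (n-1) 0)"
proof -
  assume n: "n \<ge> 1" and k: "k \<ge> 1"
  have E0: "Eset n (replicate (n-1) 0) = {}"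
    unfolding Eset_def using sublist_length_le n by fastforce
  have l0: "lst n (replicate (n-1) 0) = replicate (n-1) 0" unfolding lst_def by simp
  show ?thesis unfolding Inv_def InS_def OutS_def E0 l0 using k by auto
qed



lemma Inv_gen: assumes "n \<ge> 1" "k \<ge> 1" shows "Inv k n (gen k n m)"
proof (induction m)
  case 0 then show ?case using Inv_init[OF assms] by simp
next
  case (Suc m)
  show ?case
  proof (cases "next_sym k n (gen k n m)")
    case None then show ?thesis using Suc by simp
  next
    case (Some i) then show ?thesis using Suc Inv_step[OF Suc assms(1) Some] by simp
  qed
qed

lemma Inv_sub:
  assumes "Inv k n w" shows "Eset n w \<subseteq> prim_words k n"
proof
  fix e assume e: "e \<in> Eset n w"
  have "set w \<subseteq> {..<k}" "\<forall>e\<in>Eset n w. primitive e" using assms unfolding Inv_def by blast+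
  moreover have "set e \<subseteq> set w" "length e = n" using e unfolding Eset_def by (auto dest: set_mono_sublist)
  ultimately show "e \<in> prim_words k n" using e unfolding prim_words_def by auto
qed

lemma finite_prim_words: "finite (prim_words k n)"
proof -
  have "prim_words k n \<subseteq> {xs. set xs \<subseteq> {..<k} \<and> length xs = n}" unfolding prim_words_def by auto
  moreover have "finite {xs. set xs \<subseteq> {..<k} \<and> length xs = (n::nat)}"
    by (rule finite_lists_length_eq) simp
  ultimately show ?thesis by (rule finite_subset)
qed

lemma terminates:
  assumes n: "n \<ge> 1" and k: "k \<ge> 1"
  shows "\<exists>m. next_sym k n (gen k n m) = None"
proof (rule ccontr)
  assume "\<not> ?thesis"
  then have h: "\<And>m. next_sym k n (gen k n m) \<noteq> None" by simp
  have len: "length (gen k n m) = n - 1 + m" for m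
  proof (induction m)
    case 0 then show ?case by simp
  next
    case (Suc m)
    obtain i where "next_sym k n (gen k n m) = Some i" using h[of m] by auto
    then show ?case using Suc by simp
  qed
  define M where "M = card (prim_words k n) + 1"
  have inv: "Inv k n (gen k n M)" using Inv_gen n k by blast
  then have "card (Eset n (gen k n M)) + (n - 1) = length (gen k n M)" unfolding Inv_def by blast
  then have "card (Eset n (gen k n M)) = M" using len[of M] by simp
  moreover have "card (Eset n (gen k n M)) \<le> card (prim_words k n)"
    using Inv_sub[OF inv] finite_prim_words by (rule card_mono[rotated])
  ultimately show False unfolding M_def by simp
qed



definition adm :: "nat \<Rightarrow> nat list \<Rightarrow> nat set" where
  "adm k y = {a. a < k \<and> primitive (y @ [a])}"

definition Done :: "nat \<Rightarrow> nat \<Rightarrow> nat list \<Rightarrow> nat list \<Rightarrow> bool" where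
  "Done k n w y \<longleftrightarrow> (\<forall>a<k. primitive (y @ [a]) \<longrightarrow> y @ [a] \<in> Eset n w)"

lemma finite_adm: "finite (adm k y)" unfolding adm_def by (rule finite_subset[of _ "{..<k}"]) auto

lemma card_img_snoc: "card ((\<lambda>a. y @ [a]) ` A) = card (A :: nat set)"
  by (rule card_image) (auto simp: inj_on_def)

lemma card_img_cons: "card ((\<lambda>a. a # y) ` A) = card (A :: nat set)"
  by (rule card_image) (auto simp: inj_on_def)

lemma nth_Cons_rep: "m < Suc t \<Longrightarrow> (a # replicate t a) ! m = a"
  by (cases m) auto

context
  fixes k n :: nat and w :: "nat list"
  assumes k: "k \<ge> 2" and n: "n \<ge> 1" and inv: "Inv k n w" and ns: "next_sym k n w = None"
begin

lemma lw: "length w \<ge> n - 1" and sw: "set w \<subseteq> {..<k}"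
    and pr: "\<forall>e\<in>Eset n w. primitive e"
    and bal: "\<And>y. card (InS n w y) + (if y = replicate (n-1) 0 then 1 else 0)
            = card (OutS n w y) + (if y = lst n w then 1 else 0)"
    and top: "\<And>y a a'. y @ [a] \<in> Eset n w \<Longrightarrow> a < a' \<Longrightarrow> a' < k \<Longrightarrow> primitive (y @ [a'])
            \<Longrightarrow> y @ [a'] \<in> Eset n w"
  using inv unfolding Inv_def by blast+

lemma E_props: "e \<in> Eset n w \<Longrightarrow> length e = n \<and> set e \<subseteq> {..<k} \<and> primitive e"
  using pr sw unfolding Eset_def by (auto dest: set_mono_sublist)

lemma Out_sub: "OutS n w y \<subseteq> (\<lambda>a. y @ [a]) ` adm k y"
proof
  fix e assume e: "e \<in> OutS n w y"
  then have eE: "e \<in> Eset n w" and bl: "butlast e = y" unfolding OutS_def by auto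
  have "e \<noteq> []" using E_props[OF eE] n by auto
  then have ee: "e = y @ [last e]" using bl by (metis append_butlast_last_id)
  have "last e < k" using E_props[OF eE] \<open>e \<noteq> []\<close> by (auto simp: last_in_set subset_iff)
  moreover have "primitive (y @ [last e])" using E_props[OF eE] ee by simp
  ultimately show "e \<in> (\<lambda>a. y @ [a]) ` adm k y" unfolding adm_def using ee by blast
qed

lemma In_sub: "InS n w y \<subseteq> (\<lambda>a. a # y) ` adm k y"
proof
  fix e assume e: "e \<in> InS n w y"
  then have eE: "e \<in> Eset n w" and bl: "tl e = y" unfolding InS_def by auto
  have "e \<noteq> []" using E_props[OF eE] n by auto
  then have ee: "e = hd e # y" using bl by (metis list.collapse)
  have "hd e < k" using E_props[OF eE] \<open>e \<noteq> []\<close> by (auto simp: hd_in_set subset_iff)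
  moreover have "primitive (y @ [hd e])" using E_props[OF eE] ee prim_cons_snoc by metis
  ultimately show "e \<in> (\<lambda>a. a # y) ` adm k y" unfolding adm_def using ee by blast
qed

lemma Out_eq:
  assumes "length y = n - 1" "Done k n w y"
  shows "OutS n w y = (\<lambda>a. y @ [a]) ` adm k y"
proof
  show "OutS n w y \<subseteq> (\<lambda>a. y @ [a]) ` adm k y" by (rule Out_sub)
  show "(\<lambda>a. y @ [a]) ` adm k y \<subseteq> OutS n w y"
  proof
    fix e assume "e \<in> (\<lambda>a. y @ [a]) ` adm k y"
    then obtain a where a: "a \<in> adm k y" "e = y @ [a]" by blast
    then have "e \<in> Eset n w" using assms(2) unfolding Done_def adm_def by auto
    then show "e \<in> OutS n w y" unfolding OutS_def using a by simp
  qed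
qed

lemma Done_last: "Done k n w (lst n w)"
  unfolding Done_def
proof (intro allI impI)
  fix a assume "a < k" "primitive (lst n w @ [a])"
  then have "sublist (lst n w @ [a]) w" using next_sym_None[OF ns] by blast
  moreover have "length (lst n w @ [a]) = n" unfolding lst_def using lw n by simp
  ultimately show "lst n w @ [a] \<in> Eset n w" unfolding Eset_def by simp
qed

lemma last_s: "lst n w = replicate (n-1) 0"
proof (rule ccontr)
  assume ne: "lst n w \<noteq> replicate (n-1) 0"
  define x where "x = lst n w"
  have lx: "length x = n - 1" unfolding x_def lst_def using lw by simp
  have "card (InS n w x) = card (OutS n w x) + 1" using bal[of x] ne unfolding x_def by simp
  also have "card (OutS n w x) = card (adm k x)"
    using Out_eq[OF lx] Done_last card_img_snoc unfolding x_def by metis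
  finally have a: "card (InS n w x) = card (adm k x) + 1" .
  have "card (InS n w x) \<le> card ((\<lambda>a. a # x) ` adm k x)"
    by (rule card_mono) (use In_sub finite_adm in auto)
  then show False using a card_img_cons by simp
qed

lemma bal0: "card (InS n w y) = card (OutS n w y)"
  using bal[of y] last_s by (auto split: if_splits)

lemma F1:
  assumes ly: "length y = n - 1" and D: "Done k n w y" and a: "a \<in> adm k y"
  shows "a # y \<in> Eset n w"
proof -
  define T where "T = (\<lambda>a. a # y) ` adm k y"
  have fT: "finite T" unfolding T_def using finite_adm by simp
  have "card (InS n w y) = card T"
    using bal0[of y] Out_eq[OF ly D] card_img_snoc card_img_cons unfolding T_def by metis
  then have "InS n w y = T" using In_sub fT unfolding T_def by (metis card_subset_eq)
  moreover have "a # y \<in> T" unfolding T_def using a by simp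
  ultimately show ?thesis unfolding InS_def by auto
qed

lemma F2:
  assumes lx: "length x = n - 1" and n2: "n \<ge> 2" and sx: "set x \<subseteq> {..<k}"
    and c: "c \<in> adm k x" and cm: "\<forall>a\<in>adm k x. c \<le> a" and D: "Done k n w (tl x @ [c])"
  shows "Done k n w x"
proof -
  define y where "y = tl x @ [c]"
  have xne: "x \<noteq> []" using lx n2 by auto
  have ly: "length y = n - 1" unfolding y_def using lx xne n2 by simp
  have xc: "hd x # y = x @ [c]" unfolding y_def using xne by simp
  have "hd x < k" using sx xne by (auto simp: hd_in_set subset_iff)
  moreover have "primitive (y @ [hd x])"
    using c xc prim_cons_snoc unfolding adm_def by (metis mem_Collect_eq)
  ultimately have "hd x \<in> adm k y" unfolding adm_def by simp
  then have "hd x # y \<in> Eset n w" using F1[OF ly] D unfolding y_def by blast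
  then have xcE: "x @ [c] \<in> Eset n w" using xc by simp
  show ?thesis unfolding Done_def
  proof (intro allI impI)
    fix a assume a: "a < k" "primitive (x @ [a])"
    then have "a \<in> adm k x" unfolding adm_def by simp
    then have "c \<le> a" using cm by blast
    then show "x @ [a] \<in> Eset n w"
    proof (cases "c = a")
      case True then show ?thesis using xcE by simp
    next
      case False then show ?thesis using top[OF xcE] a \<open>c \<le> a\<close> by simp
    qed
  qed
qed


lemma orbit:
  assumes "t \<le> n - 1"
  shows "\<forall>x. length x = n - 1 \<longrightarrow> set x \<subseteq> {..<k} \<longrightarrow>
           (\<forall>i. n - 1 - t \<le> i \<longrightarrow> i < n - 1 \<longrightarrow> x!i = 0) \<longrightarrow> Done k n w x"
  using assms
proof (induction "n - 1 - t" arbitrary: t)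
  case 0
  then have t: "t = n - 1" by simp
  show ?case
  proof (intro allI impI)
    fix x assume lx: "length x = n - 1" and "set x \<subseteq> {..<k}"
      and z: "\<forall>i. n - 1 - t \<le> i \<longrightarrow> i < n - 1 \<longrightarrow> x!i = 0"
    have "x = replicate (n-1) 0"
      by (rule nth_equalityI) (use lx z t in auto)
    then show "Done k n w x" using Done_last last_s by simp
  qed
next
  case (Suc m)
  have tl1: "t < n - 1" using Suc by simp
  have IH: "\<forall>x. length x = n - 1 \<longrightarrow> set x \<subseteq> {..<k} \<longrightarrow>
           (\<forall>i. n - 1 - (t+1) \<le> i \<longrightarrow> i < n - 1 \<longrightarrow> x!i = 0) \<longrightarrow> Done k n w x"
    using Suc.hyps(1)[of "t+1"] Suc.hyps(2) tl1 by simp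
  have n2: "n \<ge> 2" using tl1 by simp
  have k0: "0 < k" using k by simp
  show ?case
  proof (intro allI impI)
    fix x assume lx: "length x = n - 1" and sx: "set x \<subseteq> {..<k}"
      and z: "\<forall>i. n - 1 - t \<le> i \<longrightarrow> i < n - 1 \<longrightarrow> x!i = 0"
    have xne: "x \<noteq> []" using lx n2 by auto
    show "Done k n w x"
    proof (cases "x!(n-2-t) = 0")
      case True
      have "\<forall>i. n - 1 - (t+1) \<le> i \<longrightarrow> i < n - 1 \<longrightarrow> x!i = 0"
      proof (intro allI impI)
        fix i assume "n - 1 - (t+1) \<le> i" "i < n - 1"
        then show "x!i = 0" using z True by (cases "i = n - 2 - t") auto
      qed
      then show ?thesis using IH lx sx by blast
    next
      case False
      note nz = False
      show ?thesis
      proof (cases "adm k x = {}")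
        case True
        then show ?thesis unfolding Done_def adm_def by auto
      next
        case False
        define c where "c = Min (adm k x)"
        have cA: "c \<in> adm k x" unfolding c_def using False finite_adm by simp
        have cm: "\<forall>a\<in>adm k x. c \<le> a" unfolding c_def using finite_adm by simp
        have ck: "c < k" using cA unfolding adm_def by simp
        show ?thesis
        proof (cases "c = 0")
          case True
          define y where "y = tl x @ [0]"
          have ly: "length y = n - 1" unfolding y_def using lx xne n2 by simp
          have sy: "set y \<subseteq> {..<k}" unfolding y_def using sx k0 xne
            by (auto simp: list.set_sel(2) subset_iff dest: list.set_sel(2))
          have "\<forall>i. n - 1 - (t+1) \<le> i \<longrightarrow> i < n - 1 \<longrightarrow> y!i = 0"
          proof (intro allI impI)
            fix i assume i: "n - 1 - (t+1) \<le> i" "i < n - 1"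
            show "y!i = 0"
            proof (cases "i = n - 2")
              case True then show ?thesis unfolding y_def using lx xne n2
                by (auto simp: nth_append)
            next
              case False
              then have "i < length (tl x)" using i lx by simp
              then have "y!i = x!(Suc i)" unfolding y_def by (simp add: nth_append nth_tl)
              also have "\<dots> = 0" using z i False by simp
              finally show ?thesis .
            qed
          qed
          then have "Done k n w y" using IH ly sy by blast
          then show ?thesis using F2[OF lx n2 sx cA cm] True unfolding y_def by simp
        next
          case False
          note c0 = False
          have "0 \<notin> adm k x" using cm c0 by auto
          then have np: "\<not> primitive (x @ [0])" using k0 unfolding adm_def by simp
          define Z where "Z = x @ [0::nat]"
          have lZ: "length Z = n" unfolding Z_def using lx n by simp
          obtain d where d: "0 < d" "d < n" "d dvd n"
            and perZ: "\<forall>i i'. i < n \<longrightarrow> i' < n \<longrightarrow> i mod d = i' mod d \<longrightarrow> Z!i = Z!i'"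
            using nonprim_period[of Z] np lZ n unfolding Z_def by auto
          have dt: "t + 1 < d"
          proof (rule ccontr)
            assume "\<not> t + 1 < d"
            define p where "p = n - 2 - t + d"
            have "Z!(n-2-t) = Z!p"
            proof -
              have "p = (n-2-t) + 1 * d" unfolding p_def by simp
              then have "(n-2-t) mod d = p mod d" by (metis mod_add_mult_eq)
              then show ?thesis using perZ \<open>\<not> t + 1 < d\<close> tl1 unfolding p_def by auto
            qed
            moreover have "Z!p = 0"
            proof (cases "p < n - 1")
              case True
              then have "Z!p = x!p" unfolding Z_def using lx by (auto simp: nth_append)
              then show ?thesis using z True d(1) tl1 unfolding p_def by auto
            next
              case False
              then have "p = n - 1" using \<open>\<not> t + 1 < d\<close> tl1 unfolding p_def by simp
              then show ?thesis unfolding Z_def using lx by (auto simp: nth_append)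
            qed
            moreover have "Z!(n-2-t) = x!(n-2-t)" unfolding Z_def using lx tl1 by (auto simp: nth_append)
            ultimately show False using nz by simp
          qed
          define L where "L = x @ [c]"
          define V where "V j = drop (j+1) L @ replicate j (0::nat)" for j
          have lV: "length (V j) = n - 1" if "j + 1 \<le> n" for j
            unfolding V_def L_def using that lx n by simp
          have sV: "set (V j) \<subseteq> {..<k}" for j
          proof -
            have "set (drop (j+1) L) \<subseteq> set L" by (rule set_drop_subset)
            moreover have "set L \<subseteq> {..<k}" unfolding L_def using sx ck by simp
            ultimately have A: "set (drop (j+1) L) \<subseteq> {..<k}" by (rule order_trans)
            have B: "set (replicate j (0::nat)) \<subseteq> {..<k}" using k0 by (induction j) auto
            show ?thesis unfolding V_def using A B by simp
          qed
          have primV: "primitive (V j @ [0])" if "j + 1 < d" for j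
          proof -
            have lx1: "length x + 1 = n" using lx n by simp
            have perZ': "\<forall>i i'. i < n \<longrightarrow> i' < n \<longrightarrow> i mod d = i' mod d \<longrightarrow> (x@[0])!i = (x@[0])!i'"
              using perZ unfolding Z_def .
            have "primitive (drop (j+1) (x@[c]) @ replicate (j+1) 0)"
              by (rule L1[OF lx1 d perZ' c0 that])
            moreover have "V j @ [0] = drop (j+1) (x@[c]) @ replicate (j+1) 0"
              unfolding V_def L_def by (simp add: replicate_append_same)
            ultimately show ?thesis by simp
          qed
          have tlV: "tl (V j) @ [0] = V (j+1)" if "j + 1 < n" for j
          proof -
            have "drop (j+1) L \<noteq> []" unfolding L_def using that lx by simp
            then have "tl (V j) = tl (drop (j+1) L) @ replicate j 0" unfolding V_def by simp
            moreover have "tl (drop (j+1) L) = drop (j+2) L" by (simp add: drop_Suc tl_drop)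
            ultimately show ?thesis unfolding V_def by (simp add: replicate_append_same)
          qed
          have zV: "\<forall>i. n - 1 - (t+1) \<le> i \<longrightarrow> i < n - 1 \<longrightarrow> V (t+1) ! i = 0"
          proof (intro allI impI)
            fix i assume i: "n - 1 - (t+1) \<le> i" "i < n - 1"
            have "length (drop (t+2) L) = n - 1 - (t+1)" unfolding L_def using lx tl1 by simp
            moreover have idx: "i - (n - 1 - (t+1)) < Suc t" using i tl1 by arith
            ultimately show "V (t+1) ! i = 0" unfolding V_def using i by (simp add: nth_append nth_Cons_rep)
          qed
          have DV: "Done k n w (V (t + 1 - h))" if "h \<le> t + 1" for h
            using that
          proof (induction h)
            case 0
            have "Done k n w (V (t+1))" using IH lV[of "t+1"] sV zV tl1 by simp
            then show ?case by simp
          next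
            case (Suc h)
            define j where "j = t - h"
            have hj: "t + 1 - Suc h = j" "t + 1 - h = j + 1" unfolding j_def using Suc.prems by simp_all
            have D1: "Done k n w (V (j+1))" using Suc hj by simp
            have j1: "j + 1 < n" using hj tl1 unfolding j_def by simp
            have "Done k n w (V j)"
            proof (rule F2[OF lV[of j] n2 sV])
              show "j + 1 \<le> n" using j1 by simp
              show "0 \<in> adm k (V j)" unfolding adm_def using k0 primV[of j] dt unfolding j_def by simp
              show "\<forall>a\<in>adm k (V j). 0 \<le> a" by simp
              show "Done k n w (tl (V j) @ [0])" using tlV[OF j1] D1 by simp
            qed
            then show ?case using hj by simp
          qed
          have "Done k n w (V 0)" using DV[of "t+1"] by simp
          moreover have "V 0 = tl x @ [c]" unfolding V_def L_def using xne by (cases x) auto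
          ultimately show ?thesis using F2[OF lx n2 sx cA cm] by simp
        qed
      qed
    qed
  qed
qed

lemma all_done:
  assumes "length x = n - 1" "set x \<subseteq> {..<k}"
  shows "Done k n w x"
  using orbit[of 0] assms by simp

lemma prim_sub: "prim_words k n \<subseteq> Eset n w"
proof
  fix u assume "u \<in> prim_words k n"
  then have lu: "length u = n" and su: "set u \<subseteq> {..<k}" and pu: "primitive u"
    unfolding prim_words_def by auto
  have une: "u \<noteq> []" using lu n by auto
  define y where "y = butlast u"
  have uy: "u = y @ [last u]" unfolding y_def using une by simp
  have "length y = n - 1" unfolding y_def using lu by simp
  moreover have "set y \<subseteq> {..<k}" unfolding y_def using su by (meson in_set_butlastD subset_iff)
  ultimately have "Done k n w y" by (rule all_done)
  moreover have "last u < k" using su une by (auto simp: subset_iff)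
  ultimately have "y @ [last u] \<in> Eset n w" using pu uy unfolding Done_def by metis
  then show "u \<in> Eset n w" using uy by simp
qed

end


theorem proposition1:
  fixes k n :: nat
  assumes "k \<ge> 2" and "n \<ge> 1"
  shows "\<exists>m. next_sym k n (gen k n m) = None
            \<and> length (gen k n m) = card (prim_words k n) + n - 1
            \<and> (\<forall>w \<in> prim_words k n. sublist w (gen k n m))"
proof -
  have k1: "k \<ge> 1" using assms by simp
  obtain m where ns: "next_sym k n (gen k n m) = None" using terminates[OF assms(2) k1] by blast
  have inv: "Inv k n (gen k n m)" using Inv_gen[OF assms(2) k1] .
  have sub1: "Eset n (gen k n m) \<subseteq> prim_words k n" by (rule Inv_sub[OF inv])
  have sub2: "prim_words k n \<subseteq> Eset n (gen k n m)" by (rule prim_sub[OF assms(1) assms(2) inv ns])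
  have eq: "Eset n (gen k n m) = prim_words k n" using sub1 sub2 by blast
  have "card (Eset n (gen k n m)) + (n-1) = length (gen k n m)" using inv unfolding Inv_def by blast
  then have len: "length (gen k n m) = card (prim_words k n) + n - 1" using eq assms(2) by simp
  have "\<forall>w\<in>prim_words k n. sublist w (gen k n m)" using sub2 unfolding Eset_def by blast
  then show ?thesis using ns len by blast
qed

end
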